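(* Let $\mathfrak S=(\mathcal S,\mathcal U,T_{\mathfrak s})$ be a controlled Markov process, let $\mathcal P=\langle B_1,\dots,B_\ell\rangle$ be a partition of $\mathcal S$ into measurable sets, and let $\rho$ be any stationary control policy. Let $W:=\mathsf{WinDom}(\mathfrak S,\rho)=\{s\in\mathcal S\mid P_s^{\rho}(\mathfrak S\models \mathit{Parity}(\mathcal P))=1\}$. Then for every $s\in\mathcal S$: $P_s^{\rho}(\mathfrak S\models \mathit{Parity}(\mathcal P))=1$ if $s\in W$, and $P_s^{\rho}(\mathfrak S\models \mathit{Parity}(\mathcal P))\ge P_s^{\rho}(\mathfrak S\models \lozenge W)$ if $s\notin W$.
   Context: A controlled Markov process (CMP) is a tuple $\mathfrak S=(\mathcal S,\mathcal U,T_{\mathfrak s})$ where $\mathcal S$ is a Borel space (with its Borel $\sigma$-algebra $\mathcal B(\mathcal S)$), $\mathcal U$ is a finite set of inputs, and $T_{\mathfrak s}$ is a stochastic kernel assigning to each $s\in\mathcal S$, $u\in\mathcal U$ a probability measure $T_{\mathfrak s}(\cdot\mid s,u)$ on $(\mathcal S,\mathcal B(\mathcal S))$. A stationary control policy is a universally measurable map $\rho:\mathcal S\to\mathcal U$. For $s\in\mathcal S$, $P_s^\rho$ denotes the unique probability measure on infinite paths $(s^0,s^1,\dots)\in\mathcal S^\omega$ with $s^0=s$ and $s^{k+1}$ distributed according to $T_{\mathfrak s}(\cdot\mid s^k,\rho(s^k))$. Given the partition $\mathcal P=\langle B_1,\dots,B_\ell\rangle$ of $\mathcal S$ (some $B_i$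 may be empty; $i$ is the priority of $B_i$), an infinite path satisfies $\mathit{Parity}(\mathcal P)$ iff for every odd $i\in\{1,\dots,\ell\}$, if the path visits $B_i$ infinitely often then it visits $B_j$ infinitely often for some even $j\in\{i+1,\dots,\ell\}$; $(\mathfrak S\models\mathit{Parity}(\mathcal P))$ denotes the set of such paths. For $W\subseteq\mathcal S$, $(\mathfrak S\models\lozenge W)$ is the set of paths $(s^0,s^1,\dots)$ with $s^n\in W$ for some $n\in\mathbb N$. *)

theory Defs
  imports "HOL-Probability.Probability"
begin

definition cmp :: "('s::polish_space \<Rightarrow> 'u::finite \<Rightarrow> 's measure) \<Rightarrow> bool" where
  "cmp T \<longleftrightarrow>
     (\<forall>s u. prob_space (T s u) \<and> sets (T s u) = sets (borel :: 's measure)) \<and>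
     (\<forall>u A. A \<in> sets (borel :: 's measure) \<longrightarrow> (\<lambda>s. emeasure (T s u) A) \<in> borel_measurable borel)"

definition univ_measurable :: "('s::topological_space \<Rightarrow> 'u) \<Rightarrow> bool" where
  "univ_measurable f \<longleftrightarrow>
     (\<forall>\<mu>::'s measure. prob_space \<mu> \<and> sets \<mu> = sets borel \<longrightarrow>
        f \<in> measurable (completion \<mu>) (count_space UNIV))"

text \<open>P s is the path measure P_s^rho: a probability measure on infinite paths
(streams, Borel product sigma-algebra), starting in s, with successor states
distributed according to T(.|s, rho s) (Markov property).  This fixpoint
equation determines the family uniquely (it fixes all cylinder probabilities).\<close>
definition path_measure ::
  "('s::polish_space \<Rightarrow> 'u \<Rightarrow> 's measure) \<Rightarrow> ('s \<Rightarrow> 'u) \<Rightarrow> ('s \<Rightarrow> 's stream measure) \<Rightarrow> bool" where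
  "path_measure T \<rho> P \<longleftrightarrow>
     (\<forall>s. prob_space (P s) \<and> sets (P s) = sets (stream_space (borel :: 's measure)) \<and>
        (\<forall>X \<in> sets (stream_space (borel :: 's measure)).
           emeasure (P s) X =
             (\<integral>\<^sup>+ s'. emeasure (P s') {\<omega>. s ## \<omega> \<in> X} \<partial>completion (T s (\<rho> s)))))"

text \<open>B 1, ..., B l is a partition of the state space into measurable sets
(empty blocks allowed).\<close>
definition measurable_partition :: "(nat \<Rightarrow> 's::topological_space set) \<Rightarrow> nat \<Rightarrow> bool" where
  "measurable_partition B l \<longleftrightarrow>
     (\<forall>i\<in>{1..l}. B i \<in> sets borel) \<and>
     (\<forall>i\<in>{1..l}. \<forall>j\<in>{1..l}. i \<noteq> j \<longrightarrow> B i \<inter> B j = {}) \<and>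
     (\<Union>i\<in>{1..l}. B i) = UNIV"

definition Parity :: "(nat \<Rightarrow> 's set) \<Rightarrow> nat \<Rightarrow> 's stream set" where
  "Parity B l = {\<omega>. \<forall>i\<in>{1..l}. odd i \<and> (\<exists>\<^sub>\<infinity>n. \<omega> !! n \<in> B i) \<longrightarrow>
                    (\<exists>j\<in>{i+1..l}. even j \<and> (\<exists>\<^sub>\<infinity>n. \<omega> !! n \<in> B j))}"

definition Eventually_in :: "'s set \<Rightarrow> 's stream set" where
  "Eventually_in W = {\<omega>. \<exists>n. \<omega> !! n \<in> W}"

text \<open>Probabilities of path events are taken in the completion of P_s
(universally measurable path events).\<close>
definition WinDom :: "('s \<Rightarrow> 's stream measure) \<Rightarrow> (nat \<Rightarrow> 's set) \<Rightarrow> nat \<Rightarrow> 's set" where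
  "WinDom P B l = {s. measure (completion (P s)) (Parity B l) = 1}"

end

theory Submission
  imports Defs
begin


lemma sets_stream_space_scyl:
  "sets (stream_space S) = sigma_sets (streams (space S)) (scylinder (space S) ` lists (sets S))"
proof -
  let ?G = "scylinder (space S) ` lists (sets S)"
  have S: "sets S = sets (sigma (space S) (sets S))" by simp
  have sc_Pow: "?G \<subseteq> Pow (streams (space S))"
    using scylinder_streams by auto
  have "sets (stream_space S) = sets (sigma (streams (space S)) ?G)"
    (is "?S = sets ?R")
  proof (rule antisym)
    let ?V = "\<lambda>i. vimage_algebra (streams (space S)) (\<lambda>s. s !! i) S"
    show "?S \<subseteq> sets ?R"
      unfolding sets_stream_space_eq
    proof (safe intro!: sets_Sup_in_sets del: subsetI equalityI)
      fix i :: nat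
      show "space (?V i) = space ?R"
        using scylinder_streams by (subst space_measure_of) auto
      { fix A assume "A \<in> sets S"
        then have "scylinder (space S) (replicate i (space S) @ [A]) = (\<lambda>s. s !! i) -` A \<inter> streams (space S)"
          by (induction i) (auto simp add: streams_shd streams_stl cong: conj_cong)
        moreover have "scylinder (space S) (replicate i (space S) @ [A]) \<in> ?R"
          using \<open>A \<in> sets S\<close>
          by (intro in_measure_of[OF sc_Pow] imageI) auto
        ultimately have "(\<lambda>s. s !! i) -` A \<inter> streams (space S) \<in> ?R" by simp }
      then show "sets (?V i) \<subseteq> ?R"
        apply (subst vimage_algebra_cong[OF refl refl S])
        apply (subst vimage_algebra_sigma)
        apply (simp add: sets.space_closed)
        apply (simp add: streams_iff_snth) []
        apply (subst sigma_le_sets)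
        apply auto
        done
    qed
    show "sets ?R \<subseteq> ?S"
      unfolding sigma_le_sets[OF sc_Pow] by (auto intro!: sets_scylinder)
  qed
  then show ?thesis by (simp add: sc_Pow)
qed

lemma Int_stable_scyl: "Int_stable (scylinder (space S) ` lists (sets S))"
proof (rule Int_stableI_image)
  fix xs ys assume "xs \<in> lists (sets S)" "ys \<in> lists (sets S)"
  then show "\<exists>zs\<in>lists (sets S). scylinder (space S) xs \<inter> scylinder (space S) ys = scylinder (space S) zs"
  proof (induction xs arbitrary: ys)
    case Nil then show ?case
      by (auto simp add: Int_absorb1 scylinder_streams)
  next
    case xs: (Cons x xs)
    show ?case
    proof (cases ys)
      case Nil with xs.hyps show ?thesis
        by (auto simp add: Int_absorb2 scylinder_streams intro!: bexI[of _ "x#xs"])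
    next
      case ys: (Cons y ys')
      with xs.IH[of ys'] xs.prems obtain zs where
        "zs \<in> lists (sets S)" and eq: "scylinder (space S) xs \<inter> scylinder (space S) ys' = scylinder (space S) zs"
        by auto
      show ?thesis
      proof (intro bexI[of _ "(x \<inter> y)#zs"])
        show "x \<inter> y # zs \<in> lists (sets S)"
          using \<open>zs\<in>lists (sets S)\<close> \<open>x\<in>sets S\<close> \<open>ys\<in>lists (sets S)\<close> ys by auto
        show "scylinder (space S) (x # xs) \<inter> scylinder (space S) ys = scylinder (space S) (x \<inter> y # zs)"
          by (auto simp add: eq[symmetric] ys)
      qed
    qed
  qed
qed



definition UM :: "('s::topological_space \<Rightarrow> ennreal) \<Rightarrow> bool" where
  "UM f \<longleftrightarrow> (\<forall>\<mu>::'s measure. prob_space \<mu> \<and> sets \<mu> = sets borel \<longrightarrow> f \<in> borel_measurable (completion \<mu>))"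

lemma borel_measurable_completion_AE:
  fixes H h :: "'a \<Rightarrow> ennreal"
  assumes H: "H \<in> borel_measurable M" and ae: "AE x in M. h x = H x"
  shows "h \<in> borel_measurable (completion M)"
proof (rule measurableI)
  fix x assume "x \<in> space (completion M)" then show "h x \<in> space borel" by simp
next
  fix Y :: "ennreal set" assume Y: "Y \<in> sets borel"
  have A: "H -` Y \<inter> space M \<in> sets (completion M)"
    using measurable_sets[OF H Y] by simp
  have "AE x in completion M. x \<in> H -` Y \<inter> space M \<longleftrightarrow> x \<in> h -` Y \<inter> space (completion M)"
    using AE_completion[OF ae] by (auto elim!: eventually_mono)
  then show "h -` Y \<inter> space (completion M) \<in> sets (completion M)"
    by (rule completion.in_sets_AE[OF _ A]) auto
qed

locale cmpctx =
  fixes T :: "'s::polish_space \<Rightarrow> 'u::finite \<Rightarrow> 's measure"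
    and \<rho> :: "'s \<Rightarrow> 'u"
    and P :: "'s \<Rightarrow> 's stream measure"
  assumes cmpT: "cmp T" and rho: "univ_measurable \<rho>" and PM: "path_measure T \<rho> P"
begin

lemma T_prob: "prob_space (T s u)" and T_sets: "sets (T s u) = sets borel"
  using cmpT by (auto simp: cmp_def)

lemma T_meas: "(\<lambda>s. T s u) \<in> borel \<rightarrow>\<^sub>M prob_algebra borel"
  apply (rule measurable_prob_algebraI)
   apply (rule T_prob)
  apply (rule measurable_subprob_algebra)
  using cmpT T_prob T_sets by (auto simp: cmp_def prob_space_imp_subprob_space)

lemma UM_int_u:
  assumes g: "UM g"
  shows "UM (\<lambda>s. \<integral>\<^sup>+x. g x \<partial>completion (T s u))"
  unfolding UM_def
proof (intro allI impI, elim conjE)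
  fix L :: "'s measure" assume pl: "prob_space L" and sl: "sets L = sets borel"
  have Tm: "(\<lambda>s. T s u) \<in> L \<rightarrow>\<^sub>M prob_algebra borel"
    using T_meas measurable_cong_sets[OF sl refl] by blast
  have Tm': "(\<lambda>s. T s u) \<in> L \<rightarrow>\<^sub>M subprob_algebra borel"
    using measurable_prob_algebraD[OF Tm] .
  define \<nu> where "\<nu> = L \<bind> (\<lambda>s. T s u)"
  have ne: "space L \<noteq> {}" using prob_space.not_empty[OF pl] .
  have \<nu>p: "prob_space \<nu>"
    unfolding \<nu>_def by (rule prob_space_bind'[OF _ Tm]) (simp add: space_prob_algebra pl sl)
  have \<nu>s: "sets \<nu> = sets borel"
    unfolding \<nu>_def by (rule sets_bind[OF _ ne]) (simp add: T_sets)
  have gc: "g \<in> borel_measurable (completion \<nu>)"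
    using g \<nu>p \<nu>s unfolding UM_def by blast
  obtain g' where g': "g' \<in> borel_measurable \<nu>" and ae: "AE x in \<nu>. g x = g' x"
    using completion_ex_borel_measurable[OF gc] by blast
  have g'b: "g' \<in> borel_measurable borel"
    using g' measurable_cong_sets[OF \<nu>s refl] by blast
  obtain N where N: "N \<in> null_sets \<nu>" and Nsub: "{x\<in>space \<nu>. \<not> g x = g' x} \<subseteq> N"
    using ae by (auto elim!: AE_E)
  have Nb: "N \<in> sets borel" using N \<nu>s by auto
  have "emeasure \<nu> N = (\<integral>\<^sup>+s. emeasure (T s u) N \<partial>L)"
    unfolding \<nu>_def by (rule emeasure_bind[OF ne Tm' Nb])
  then have "(\<integral>\<^sup>+s. emeasure (T s u) N \<partial>L) = 0" using N by auto
  moreover have "(\<lambda>s. emeasure (T s u) N) \<in> borel_measurable L"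
    using measurable_emeasure_kernel[OF Tm' Nb] .
  ultimately have aeN: "AE s in L. emeasure (T s u) N = 0"
    by (simp add: nn_integral_0_iff_AE)
  define H where "H s = (\<integral>\<^sup>+x. g' x \<partial>T s u)" for s
  have Hm: "H \<in> borel_measurable L"
    unfolding H_def
    using measurable_compose[OF Tm' nn_integral_measurable_subprob_algebra[OF g'b]] by simp
  have "AE s in L. (\<integral>\<^sup>+x. g x \<partial>completion (T s u)) = H s"
    using aeN
  proof (rule eventually_mono)
    fix s assume s0: "emeasure (T s u) N = 0"
    have sp: "space (T s u) = space \<nu>"
      using T_sets \<nu>s sets_eq_imp_space_eq by metis
    have "N \<in> null_sets (T s u)" using s0 Nb T_sets by (auto simp: null_sets_def)
    then have "AE x in T s u. g x = g' x"
      using Nsub sp by (intro AE_I'[of N]) auto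
    then have "AE x in completion (T s u). g x = g' x" by (rule AE_completion)
    then have "(\<integral>\<^sup>+x. g x \<partial>completion (T s u)) = (\<integral>\<^sup>+x. g' x \<partial>completion (T s u))"
      by (rule nn_integral_cong_AE)
    also have "\<dots> = H s" by (simp add: H_def nn_integral_completion)
    finally show "(\<integral>\<^sup>+x. g x \<partial>completion (T s u)) = H s" .
  qed
  then show "(\<lambda>s. \<integral>\<^sup>+x. g x \<partial>completion (T s u)) \<in> borel_measurable (completion L)"
    by (rule borel_measurable_completion_AE[OF Hm])
qed

lemma UM_int:
  assumes g: "UM g"
  shows "UM (\<lambda>s. \<integral>\<^sup>+x. g x \<partial>completion (T s (\<rho> s)))"
  unfolding UM_def
proof (intro allI impI, elim conjE)
  fix L :: "'s measure" assume pl: "prob_space L" and sl: "sets L = sets borel"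
  have r: "\<rho> \<in> completion L \<rightarrow>\<^sub>M count_space UNIV"
    using rho pl sl unfolding univ_measurable_def by blast
  have eq: "(\<lambda>s. \<integral>\<^sup>+x. g x \<partial>completion (T s (\<rho> s))) =
      (\<lambda>s. \<Sum>u\<in>UNIV. indicator {s. \<rho> s = u} s * (\<integral>\<^sup>+x. g x \<partial>completion (T s u)))"
  proof
    fix s
    have "(\<Sum>u\<in>UNIV. indicator {s. \<rho> s = u} s * (\<integral>\<^sup>+x. g x \<partial>completion (T s u))) =
        (\<Sum>u\<in>UNIV. if u = \<rho> s then (\<integral>\<^sup>+x. g x \<partial>completion (T s u)) else 0)"
      by (intro sum.cong) (auto simp: indicator_def)
    also have "\<dots> = (\<integral>\<^sup>+x. g x \<partial>completion (T s (\<rho> s)))"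
      by simp
    finally show "(\<integral>\<^sup>+x. g x \<partial>completion (T s (\<rho> s))) =
      (\<Sum>u\<in>UNIV. indicator {s. \<rho> s = u} s * (\<integral>\<^sup>+x. g x \<partial>completion (T s u)))" ..
  qed
  have ind: "{s. \<rho> s = u} \<in> sets (completion L)" for u
  proof -
    have "\<rho> -` {u} \<inter> space (completion L) \<in> sets (completion L)"
      using measurable_sets[OF r] by simp
    moreover have "space (completion L) = UNIV"
      using sets_eq_imp_space_eq[OF sl] by simp
    ultimately show ?thesis by (simp add: vimage_def)
  qed
  have "(\<lambda>s. \<integral>\<^sup>+x. g x \<partial>completion (T s u)) \<in> borel_measurable (completion L)" for u
    using UM_int_u[OF g, of u] pl sl unfolding UM_def by blast
  then show "(\<lambda>s. \<integral>\<^sup>+x. g x \<partial>completion (T s (\<rho> s))) \<in> borel_measurable (completion L)"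
    unfolding eq using ind
    by (intro borel_measurable_sum borel_measurable_times borel_measurable_indicator) auto
qed

end


lemma INFM_Stream: "(\<exists>\<^sub>\<infinity>n. (x ## \<omega>) !! n \<in> C) \<longleftrightarrow> (\<exists>\<^sub>\<infinity>n. \<omega> !! n \<in> C)"
proof
  assume h: "\<exists>\<^sub>\<infinity>n. (x ## \<omega>) !! n \<in> C"
  show "\<exists>\<^sub>\<infinity>n. \<omega> !! n \<in> C"
    unfolding INFM_nat
  proof
    fix m
    obtain n where "n > Suc m" "(x ## \<omega>) !! n \<in> C" using h unfolding INFM_nat by blast
    then obtain k where "n = Suc k" by (cases n) auto
    with \<open>n > Suc m\<close> \<open>(x ## \<omega>) !! n \<in> C\<close> show "\<exists>n>m. \<omega> !! n \<in> C" by auto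
  qed
next
  assume h: "\<exists>\<^sub>\<infinity>n. \<omega> !! n \<in> C"
  show "\<exists>\<^sub>\<infinity>n. (x ## \<omega>) !! n \<in> C"
    unfolding INFM_nat
  proof
    fix m
    obtain n where "n > m" "\<omega> !! n \<in> C" using h unfolding INFM_nat by blast
    then show "\<exists>n>m. (x ## \<omega>) !! n \<in> C" by (intro exI[of _ "Suc n"]) auto
  qed
qed

lemma Parity_shift: "(x ## \<omega> \<in> Parity B l) \<longleftrightarrow> (\<omega> \<in> Parity B l)"
  unfolding Parity_def by (simp add: INFM_Stream)

lemma Parity_shift': "(\<omega> \<in> Parity B l) \<longleftrightarrow> (stl \<omega> \<in> Parity B l)"
  using Parity_shift[of "shd \<omega>" "stl \<omega>"] by simp

lemma Parity_sets:
  fixes B :: "nat \<Rightarrow> 's::topological_space set"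
  assumes "measurable_partition B l"
  shows "Parity B l \<in> sets (stream_space borel)"
proof -
  define B' where "B' i = (if i \<in> {1..l} then B i else {})" for i
  have B'm[measurable]: "B' i \<in> sets borel" for i
    using assms unfolding B'_def measurable_partition_def by auto
  have eq: "Parity B l = Parity B' l"
    unfolding Parity_def B'_def by (auto intro!: Collect_cong ball_cong)
  have "Parity B' l = {\<omega>\<in>space (stream_space borel). \<forall>i\<in>{1..l}. odd i \<and> (\<forall>m. \<exists>n>m. \<omega> !! n \<in> B' i) \<longrightarrow>
                    (\<exists>j\<in>{i+1..l}. even j \<and> (\<forall>m. \<exists>n>m. \<omega> !! n \<in> B' j))}"
    unfolding Parity_def INFM_nat by (simp add: space_stream_space)
  also have "\<dots> \<in> sets (stream_space borel)"
    by measurable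
  finally show ?thesis using eq by simp
qed

context cmpctx
begin

lemma P_prob: "prob_space (P s)" and P_sets: "sets (P s) = sets (stream_space borel)"
  using PM by (auto simp: path_measure_def)

lemma P_fix: "X \<in> sets (stream_space borel) \<Longrightarrow>
   emeasure (P s) X = (\<integral>\<^sup>+ s'. emeasure (P s') {\<omega>. s ## \<omega> \<in> X} \<partial>completion (T s (\<rho> s)))"
  using PM by (auto simp: path_measure_def)

lemma P_space: "space (P s) = UNIV"
  using sets_eq_imp_space_eq[OF P_sets] by (simp add: space_stream_space)

lemma scyl_sets: "scylinder UNIV xs \<in> sets (stream_space (borel::'s measure))" if "xs \<in> lists (sets borel)"
  using sets_scylinder[of xs "borel::'s measure"] that by auto

lemma UM_cyl: "xs \<in> lists (sets borel) \<Longrightarrow> UM (\<lambda>s. emeasure (P s) (scylinder UNIV xs))"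
proof (induction xs)
  case Nil
  have "emeasure (P s) (scylinder UNIV []) = 1" for s
    using prob_space.emeasure_space_1[OF P_prob, of s] by (simp add: P_space)
  then show ?case by (simp add: UM_def)
next
  case (Cons A As)
  have Ab: "A \<in> sets borel" and As: "As \<in> lists (sets borel)" using Cons.prems by auto
  define G where "G s = (\<integral>\<^sup>+ s'. emeasure (P s') (scylinder UNIV As) \<partial>completion (T s (\<rho> s)))" for s
  have G: "UM G" unfolding G_def by (rule UM_int[OF Cons.IH[OF As]])
  have eq: "emeasure (P s) (scylinder UNIV (A # As)) = indicator A s * G s" for s
  proof -
    have "emeasure (P s) (scylinder UNIV (A # As)) =
       (\<integral>\<^sup>+ s'. emeasure (P s') {\<omega>. s ## \<omega> \<in> scylinder UNIV (A # As)} \<partial>completion (T s (\<rho> s)))"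
      by (rule P_fix[OF scyl_sets]) (use Cons.prems in auto)
    also have "{\<omega>. s ## \<omega> \<in> scylinder UNIV (A # As)} = (if s \<in> A then scylinder UNIV As else {})"
      by auto
    finally show ?thesis by (cases "s \<in> A") (auto simp: G_def)
  qed
  show ?case
    unfolding UM_def
  proof (intro allI impI, elim conjE)
    fix L :: "'s measure" assume pl: "prob_space L" and sl: "sets L = sets borel"
    have "G \<in> borel_measurable (completion L)" using G pl sl unfolding UM_def by blast
    moreover have "A \<in> sets (completion L)" using Ab sl by auto
    ultimately show "(\<lambda>s. emeasure (P s) (scylinder UNIV (A # As))) \<in> borel_measurable (completion L)"
      unfolding eq by (intro borel_measurable_times_ennreal borel_measurable_indicator) auto
  qed
qed

lemma UM_sets:
  assumes X: "X \<in> sets (stream_space borel)"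
  shows "UM (\<lambda>s. emeasure (P s) X)"
proof -
  have eqs: "sets (stream_space (borel::'s measure)) = sigma_sets UNIV (scylinder UNIV ` lists (sets borel))"
    using sets_stream_space_scyl[of "borel::'s measure"] by simp
  have X': "X \<in> sigma_sets UNIV (scylinder UNIV ` lists (sets (borel::'s measure)))"
    using X eqs by simp
  have Is: "Int_stable (scylinder UNIV ` lists (sets (borel::'s measure)))"
    using Int_stable_scyl[of "borel::'s measure"] by simp
  show ?thesis
  proof (rule sigma_sets_induct_disjoint[OF Is _ X'])
    fix A assume "A \<in> scylinder UNIV ` lists (sets (borel::'s measure))"
    then show "UM (\<lambda>s. emeasure (P s) A)" using UM_cyl by auto
  next
    show "UM (\<lambda>s. emeasure (P s) {})" by (simp add: UM_def)
  next
    fix A assume h: "A \<in> sigma_sets UNIV (scylinder UNIV ` lists (sets (borel::'s measure)))"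
      and IH: "UM (\<lambda>s. emeasure (P s) A)"
    have As: "A \<in> sets (P s)" for s using h eqs P_sets by simp
    have "emeasure (P s) (UNIV - A) = 1 - emeasure (P s) A" for s
      using emeasure_compl[OF As[of s]] prob_space.emeasure_space_1[OF P_prob, of s]
      by (simp add: P_space finite_measure.emeasure_finite[OF P_prob[unfolded prob_space_def, THEN conjunct1]])
    then show "UM (\<lambda>s. emeasure (P s) (UNIV - A))" using IH unfolding UM_def
      by (simp add: borel_measurable_minus_ennreal)
  next
    fix A :: "nat \<Rightarrow> 's stream set" assume dj: "disjoint_family A"
      and h: "range A \<subseteq> sigma_sets UNIV (scylinder UNIV ` lists (sets (borel::'s measure)))"
      and IH: "\<And>i. UM (\<lambda>s. emeasure (P s) (A i))"
    have As: "range A \<subseteq> sets (P s)" for s using h eqs P_sets by simp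
    have "emeasure (P s) (\<Union>i. A i) = (\<Sum>i. emeasure (P s) (A i))" for s
      using suminf_emeasure[OF As dj] by simp
    then show "UM (\<lambda>s. emeasure (P s) (\<Union>i. A i))" using IH unfolding UM_def
      by (auto intro!: borel_measurable_suminf_order)
  qed auto
qed

end


locale parctx = cmpctx T \<rho> P for T :: "'s::polish_space \<Rightarrow> 'u::finite \<Rightarrow> 's measure" and \<rho> P +
  fixes B :: "nat \<Rightarrow> 's set" and l :: nat
  assumes part: "measurable_partition B l"
begin

lemma A_sets: "Parity B l \<in> sets (stream_space borel)"
  by (rule Parity_sets[OF part])

lemma W_eq: "WinDom P B l = {s. emeasure (P s) (Parity B l) = 1}"
proof -
  have "measure (completion (P s)) (Parity B l) = 1 \<longleftrightarrow> emeasure (P s) (Parity B l) = 1" for s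
  proof -
    have As: "Parity B l \<in> sets (P s)" using A_sets P_sets by simp
    have "measure (completion (P s)) (Parity B l) = measure (P s) (Parity B l)"
      using As by simp
    moreover have "emeasure (P s) (Parity B l) = ennreal (measure (P s) (Parity B l))"
      using finite_measure.emeasure_eq_measure[OF P_prob[unfolded prob_space_def, THEN conjunct1]] .
    ultimately show ?thesis by simp
  qed
  then show ?thesis unfolding WinDom_def by auto
qed

lemma W_compl:
  assumes pM: "prob_space M" and sM: "sets M = sets (stream_space borel)"
  shows "{\<omega>. \<omega> !! n \<in> WinDom P B l} \<in> sets (completion M)"
proof -
  have spM: "space M = UNIV"
    using sets_eq_imp_space_eq[OF sM] by (simp add: space_stream_space)
  have snm: "(\<lambda>\<omega>. \<omega> !! n) \<in> M \<rightarrow>\<^sub>M (borel :: 's measure)"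
    using measurable_snth[of n "borel::'s measure"] measurable_cong_sets[OF sM refl] by blast
  define L where "L = distr M (borel :: 's measure) (\<lambda>\<omega>. \<omega> !! n)"
  have pL: "prob_space L" unfolding L_def by (rule prob_space.prob_space_distr[OF pM snm])
  have sL: "sets L = sets borel" unfolding L_def by simp
  have f: "(\<lambda>s. emeasure (P s) (Parity B l)) \<in> borel_measurable (completion L)"
    using UM_sets[OF A_sets] pL sL unfolding UM_def by blast
  have spL0: "space L = UNIV" unfolding L_def by simp
  have spL: "space (completion L) = UNIV" unfolding L_def by simp
  have "(\<lambda>s. emeasure (P s) (Parity B l)) -` {1} \<inter> space (completion L) \<in> sets (completion L)"
    by (rule measurable_sets[OF f]) simp
  then have "WinDom P B l \<in> sets (completion L)"
    by (simp add: W_eq spL spL0 vimage_def)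
  then obtain S N N' where WSN: "WinDom P B l = S \<union> N" and NN': "N \<subseteq> N'"
    and N'n: "N' \<in> null_sets L" and S: "S \<in> sets L"
    by (rule sets_completionE)
  have N'M: "(\<lambda>\<omega>. \<omega> !! n) -` N' \<inter> space M \<in> null_sets M"
    using N'n unfolding L_def by (simp add: null_sets_distr_iff[OF snm])
  have SM: "(\<lambda>\<omega>. \<omega> !! n) -` S \<inter> space M \<in> sets M"
    using S unfolding L_def by (simp add: measurable_sets[OF snm])
  show ?thesis
    by (rule sets_completionI[of _ "(\<lambda>\<omega>. \<omega> !! n) -` S \<inter> space M" "(\<lambda>\<omega>. \<omega> !! n) -` N \<inter> space M"
          "(\<lambda>\<omega>. \<omega> !! n) -` N' \<inter> space M"])
       (use WSN NN' N'M SM spM in auto)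
qed

lemma D_null:
  "\<exists>N \<in> sets (stream_space borel). {\<omega>. \<omega> !! n \<in> WinDom P B l} - Parity B l \<subseteq> N \<and> emeasure (P s) N = 0"
proof (induction n arbitrary: s)
  case 0
  show ?case
  proof (cases "s \<in> WinDom P B l")
    case True
    then have e1: "emeasure (P s) (Parity B l) = 1" by (simp add: W_eq)
    have As: "Parity B l \<in> sets (P s)" using A_sets P_sets by simp
    have "emeasure (P s) (UNIV - Parity B l) = 0"
      using emeasure_compl[OF As] e1 prob_space.emeasure_space_1[OF P_prob, of s]
      by (simp add: P_space)
    moreover have "UNIV - Parity B l \<in> sets (stream_space borel)"
      using A_sets sets.compl_sets[OF A_sets] by (simp add: space_stream_space)
    ultimately show ?thesis by (intro bexI[of _ "UNIV - Parity B l"]) auto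
  next
    case False
    define N where "N = {\<omega>::'s stream. shd \<omega> \<noteq> s}"
    have Nm: "N \<in> sets (stream_space borel)"
    proof -
      have "N = shd -` (UNIV - {s}) \<inter> space (stream_space borel)"
        unfolding N_def by (auto simp: space_stream_space)
      also have "\<dots> \<in> sets (stream_space borel)"
        by (rule measurable_sets[OF measurable_shd]) auto
      finally show ?thesis .
    qed
    have "emeasure (P s) N = (\<integral>\<^sup>+ s'. emeasure (P s') {\<omega>. s ## \<omega> \<in> N} \<partial>completion (T s (\<rho> s)))"
      by (rule P_fix[OF Nm])
    also have "{\<omega>. s ## \<omega> \<in> N} = {}" by (simp add: N_def)
    finally have "emeasure (P s) N = 0" by simp
    moreover have "{\<omega>. \<omega> !! 0 \<in> WinDom P B l} - Parity B l \<subseteq> N"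
      using False by (auto simp: N_def)
    ultimately show ?thesis using Nm by blast
  qed
next
  case (Suc n)
  define M where "M = distr (P s) (stream_space borel) stl"
  have stlm: "stl \<in> P s \<rightarrow>\<^sub>M stream_space (borel :: 's measure)"
    using measurable_stl[of "borel::'s measure"] measurable_cong_sets[OF P_sets refl] by blast
  have pM: "prob_space M" unfolding M_def by (rule prob_space.prob_space_distr[OF P_prob stlm])
  have sM: "sets M = sets (stream_space borel)" unfolding M_def by simp
  have "{\<omega>. \<omega> !! n \<in> WinDom P B l} \<in> sets (completion M)" by (rule W_compl[OF pM sM])
  moreover have "UNIV - Parity B l \<in> sets (completion M)"
    using sets.compl_sets[OF A_sets] sM by (simp add: space_stream_space)
  ultimately have "{\<omega>. \<omega> !! n \<in> WinDom P B l} \<inter> (UNIV - Parity B l) \<in> sets (completion M)"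
    by (rule sets.Int)
  moreover have eqd: "{\<omega>. \<omega> !! n \<in> WinDom P B l} \<inter> (UNIV - Parity B l) = {\<omega>. \<omega> !! n \<in> WinDom P B l} - Parity B l"
    by blast
  ultimately have "{\<omega>. \<omega> !! n \<in> WinDom P B l} - Parity B l \<in> sets (completion M)"
    by (simp only:)
  then obtain S N0 N' where DSN: "{\<omega>. \<omega> !! n \<in> WinDom P B l} - Parity B l = S \<union> N0"
    and NN': "N0 \<subseteq> N'" and N'n: "N' \<in> null_sets M" and S: "S \<in> sets M"
    by (rule sets_completionE)
  have Sm: "S \<in> sets (stream_space borel)" using S sM by simp
  have N'm: "N' \<in> sets (stream_space borel)" using N'n sM by auto
  define NN where "NN = stl -` (S \<union> N')"
  have NNeq: "NN = stl -` (S \<union> N') \<inter> space (P s)" by (simp add: NN_def P_space)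
  have NNm: "NN \<in> sets (stream_space borel)"
  proof -
    have "S \<union> N' \<in> sets (stream_space borel)" using Sm N'm by (rule sets.Un)
    then have "stl -` (S \<union> N') \<inter> space (P s) \<in> sets (P s)" by (rule measurable_sets[OF stlm])
    then show ?thesis unfolding NNeq P_sets .
  qed
  have sub: "{\<omega>. \<omega> !! Suc n \<in> WinDom P B l} - Parity B l \<subseteq> NN"
  proof
    fix \<omega> assume "\<omega> \<in> {\<omega>. \<omega> !! Suc n \<in> WinDom P B l} - Parity B l"
    then have "stl \<omega> \<in> {\<omega>. \<omega> !! n \<in> WinDom P B l} - Parity B l"
      using Parity_shift'[of \<omega> B l] by auto
    then show "\<omega> \<in> NN" unfolding NN_def DSN using NN' by auto
  qed
  have eS: "emeasure M S = 0"
  proof -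
    have "emeasure M S = emeasure (P s) (stl -` S \<inter> space (P s))"
      unfolding M_def using Sm by (simp add: emeasure_distr[OF stlm])
    also have "stl -` S \<inter> space (P s) = stl -` S" by (simp add: P_space)
    also have "emeasure (P s) (stl -` S) =
        (\<integral>\<^sup>+ s'. emeasure (P s') {\<omega>. s ## \<omega> \<in> stl -` S} \<partial>completion (T s (\<rho> s)))"
      by (rule P_fix) (use measurable_sets[OF stlm Sm] P_sets P_space in simp)
    also have "\<dots> = (\<integral>\<^sup>+ s'. 0 \<partial>completion (T s (\<rho> s)))"
    proof (rule nn_integral_cong)
      fix s'
      obtain Ns where Ns: "Ns \<in> sets (stream_space borel)"
        and sub': "{\<omega>. \<omega> !! n \<in> WinDom P B l} - Parity B l \<subseteq> Ns" and e0: "emeasure (P s') Ns = 0"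
        using Suc.IH[of s'] by blast
      have "{\<omega>. s ## \<omega> \<in> stl -` S} = S" by simp
      moreover have "S \<subseteq> Ns" using sub' DSN by auto
      ultimately have "emeasure (P s') {\<omega>. s ## \<omega> \<in> stl -` S} \<le> emeasure (P s') Ns"
        using Ns P_sets by (intro emeasure_mono) auto
      then show "emeasure (P s') {\<omega>. s ## \<omega> \<in> stl -` S} = 0" using e0 by simp
    qed
    finally show ?thesis by simp
  qed
  have "emeasure (P s) NN = emeasure M (S \<union> N')"
    unfolding M_def NNeq using Sm N'm by (simp add: emeasure_distr[OF stlm])
  also have "\<dots> \<le> emeasure M S + emeasure M N'"
    by (rule emeasure_subadditive) (use S N'n in auto)
  also have "\<dots> = 0" using eS N'n by (simp add: null_setsD1)
  finally have "emeasure (P s) NN = 0" by simp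
  then show ?case using NNm sub by blast
qed

lemma main_ineq:
  "measure (completion (P s)) (Eventually_in (WinDom P B l)) \<le> measure (completion (P s)) (Parity B l)"
proof (cases "Eventually_in (WinDom P B l) \<in> sets (completion (P s))")
  case False
  then show ?thesis by (simp add: measure_notin_sets)
next
  case True
  obtain N where N: "\<And>n. N n \<in> sets (stream_space borel)"
    and sub: "\<And>n. {\<omega>. \<omega> !! n \<in> WinDom P B l} - Parity B l \<subseteq> N n"
    and e0: "\<And>n. emeasure (P s) (N n) = 0"
    using D_null[of _ s] by metis
  interpret Pc: prob_space "completion (P s)" by (rule prob_space.prob_space_completion[OF P_prob])
  have As: "Parity B l \<in> sets (P s)" using A_sets P_sets by simp
  have Ns: "N n \<in> sets (P s)" for n using N P_sets by simp
  have UNs: "(\<Union>n. N n) \<in> sets (P s)" using Ns by blast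
  have UN0: "emeasure (P s) (\<Union>n. N n) = 0"
    using emeasure_UN_eq_0[of "P s" N] Ns e0 by auto
  have "Eventually_in (WinDom P B l) \<subseteq> Parity B l \<union> (\<Union>n. N n)"
    unfolding Eventually_in_def using sub by blast
  then have "measure (completion (P s)) (Eventually_in (WinDom P B l)) \<le>
      measure (completion (P s)) (Parity B l \<union> (\<Union>n. N n))"
    using True As UNs by (intro Pc.finite_measure_mono) auto
  also have "\<dots> \<le> measure (completion (P s)) (Parity B l) + measure (completion (P s)) (\<Union>n. N n)"
    using As UNs by (intro measure_Un_le) auto
  also have "measure (completion (P s)) (\<Union>n. N n) = 0"
    using UNs UN0 by (simp add: measure_def)
  finally show ?thesis by simp
qed

end

theorem theorem1:
  fixes T :: "'s::polish_space \<Rightarrow> 'u::finite \<Rightarrow> 's measure"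
    and \<rho> :: "'s \<Rightarrow> 'u"
    and P :: "'s \<Rightarrow> 's stream measure"
    and B :: "nat \<Rightarrow> 's set" and l :: nat
  assumes "cmp T"
    and "measurable_partition B l"
    and "univ_measurable \<rho>"
    and "path_measure T \<rho> P"
  shows "\<forall>s. (s \<in> WinDom P B l \<longrightarrow> measure (completion (P s)) (Parity B l) = 1) \<and>
             (s \<notin> WinDom P B l \<longrightarrow>
                measure (completion (P s)) (Parity B l)
                  \<ge> measure (completion (P s)) (Eventually_in (WinDom P B l)))"
proof -
  interpret parctx T \<rho> P B l
    by unfold_locales (use assms in auto)
  show ?thesis
    using main_ineq by (auto simp: WinDom_def)
qed

end
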